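(* Let $X$ be a real Banach space, $\alpha$ an ordinal, $\varepsilon>0$, $f\in B_{X^*}$, and $M\subset X^*$ such that (i) $\mathrm{dist}(f,M)\ge\varepsilon$, and (ii) for every $\beta<\alpha$ and every weak$^*$-slice $S$ of $d_\varepsilon^\beta(B_{X^*})$ with $f\in S$, one has $S\cap M\neq\emptyset$. Then $f\in d_\varepsilon^\alpha(B_{X^*})$.
   Context: For $x\in X,t\in\mathbb R$, $H(x,t)=\{x^*\in X^*: x^*(x)>t\}$; a weak$^*$-slice of a weak$^*$-compact $K\subset X^*$ is a nonempty set $H(x,t)\cap K$; $d_\varepsilon K$ is $K$ minus the union of all weak$^*$-slices of $K$ of norm diameter $<\varepsilon$; $d_\varepsilon^0K=K$, $d_\varepsilon^{\beta+1}K=d_\varepsilon(d_\varepsilon^\beta K)$, $d_\varepsilon^\beta K=\bigcap_{\mu<\beta}d_\varepsilon^\mu K$ for limit $\beta$. A set $M$ satisfying (i),(ii) is called an $\varepsilon$-$\alpha$-obstacle for $f$. *)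

theory Defs
  imports "HOL-Analysis.Analysis"
begin

text \<open>Dual space X* is represented by bounded linear functionals \<open>'a \<Rightarrow>\<^sub>L real\<close>
  with the operator norm.  \<open>H(x,t) = {x*. x* x > t}\<close>.\<close>

definition wstar_halfspace :: "'a::real_normed_vector \<Rightarrow> real \<Rightarrow> ('a \<Rightarrow>\<^sub>L real) set" where
  "wstar_halfspace x t = {g. blinfun_apply g x > t}"

definition is_wstar_slice :: "('a::real_normed_vector \<Rightarrow>\<^sub>L real) set \<Rightarrow> ('a \<Rightarrow>\<^sub>L real) set \<Rightarrow> bool" where
  "is_wstar_slice K S \<longleftrightarrow> (\<exists>x t. S = wstar_halfspace x t \<inter> K) \<and> S \<noteq> {}"

definition szlenk_d :: "real \<Rightarrow> ('a::real_normed_vector \<Rightarrow>\<^sub>L real) set \<Rightarrow> ('a \<Rightarrow>\<^sub>L real) set" where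
  "szlenk_d \<epsilon> K = K - \<Union>{S. is_wstar_slice K S \<and> diameter S < \<epsilon>}"

text \<open>Transfinite iterates, indexed by elements of an arbitrary well-order type 'o
  (every ordinal is represented as an element of some well-ordered type):
  least element \<mapsto> K, successor \<mapsto> d of the predecessor, limit \<mapsto> intersection.\<close>
definition szlenk_iter :: "real \<Rightarrow> ('a::real_normed_vector \<Rightarrow>\<^sub>L real) set \<Rightarrow> 'o::wellorder \<Rightarrow> ('a \<Rightarrow>\<^sub>L real) set" where
  "szlenk_iter \<epsilon> K = wfrec {(\<mu>, \<beta>). \<mu> < \<beta>}
     (\<lambda>r \<beta>. if (\<forall>\<mu>. \<not> \<mu> < \<beta>) then K
            else if (\<exists>\<mu><\<beta>. \<forall>\<nu><\<beta>. \<nu> \<le> \<mu>)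
              then szlenk_d \<epsilon> (r (THE \<mu>. \<mu> < \<beta> \<and> (\<forall>\<nu><\<beta>. \<nu> \<le> \<mu>)))
            else (\<Inter>\<mu>\<in>{\<mu>. \<mu> < \<beta>}. r \<mu>))"

end

theory Submission
  imports Defs
begin

lemma wf_lt: "wf {(\<mu>, \<beta>). (\<mu>::'o::wellorder) < \<beta>}"
  using wf by simp

lemma iter_least: "(\<forall>\<mu>. \<not> \<mu> < \<beta>) \<Longrightarrow> szlenk_iter \<epsilon> K (\<beta>::'o::wellorder) = K"
  unfolding szlenk_iter_def by (subst wfrec[OF wf_lt]) simp

lemma iter_succ:
  assumes "\<mu> < (\<beta>::'o::wellorder)" "\<forall>\<nu><\<beta>. \<nu> \<le> \<mu>"
  shows "szlenk_iter \<epsilon> K \<beta> = szlenk_d \<epsilon> (szlenk_iter \<epsilon> K \<mu>)"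
proof -
  have T: "(THE \<mu>. \<mu> < \<beta> \<and> (\<forall>\<nu><\<beta>. \<nu> \<le> \<mu>)) = \<mu>"
    using assms by (intro the_equality) (auto intro: order.antisym)
  show ?thesis
    unfolding szlenk_iter_def
    apply (subst wfrec[OF wf_lt])
    using assms by (auto simp: T cut_apply)
qed

lemma iter_limit:
  assumes "\<mu>0 < (\<beta>::'o::wellorder)" "\<not> (\<exists>\<mu><\<beta>. \<forall>\<nu><\<beta>. \<nu> \<le> \<mu>)"
  shows "szlenk_iter \<epsilon> K \<beta> = (\<Inter>\<mu>\<in>{\<mu>. \<mu> < \<beta>}. szlenk_iter \<epsilon> K \<mu>)"
  unfolding szlenk_iter_def
  apply (subst wfrec[OF wf_lt])
  using assms by (auto simp: cut_apply)

lemma iter_cases: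
  fixes \<beta> :: "'o::wellorder"
  obtains "\<forall>\<mu>. \<not> \<mu> < \<beta>" | \<mu> where "\<mu> < \<beta>" "\<forall>\<nu><\<beta>. \<nu> \<le> \<mu>"
  | \<mu>0 where "\<mu>0 < \<beta>" "\<not> (\<exists>\<mu><\<beta>. \<forall>\<nu><\<beta>. \<nu> \<le> \<mu>)"
  by blast

lemma iter_sub: "szlenk_iter \<epsilon> K (\<beta>::'o::wellorder) \<subseteq> K"
proof (induction \<beta> rule: less_induct)
  case (less \<beta>)
  show ?case
  proof (cases \<beta> rule: iter_cases)
    case 1 then show ?thesis by (simp add: iter_least)
  next
    case (2 \<mu>) then show ?thesis using less[of \<mu>] by (auto simp: iter_succ szlenk_d_def)
  next
    case (3 \<mu>0) then show ?thesis using less[of \<mu>0] by (auto simp: iter_limit)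
  qed
qed

theorem mainTheorem7:
  fixes f :: "'a::banach \<Rightarrow>\<^sub>L real"
    and M :: "('a \<Rightarrow>\<^sub>L real) set"
    and \<alpha> :: "'o::wellorder"
    and \<epsilon> :: real
  assumes "\<epsilon> > 0"
    and "f \<in> cball 0 1"
    and "\<forall>g\<in>M. \<epsilon> \<le> dist f g"
    and "\<forall>\<beta>. \<beta> < \<alpha> \<longrightarrow> (\<forall>S. is_wstar_slice (szlenk_iter \<epsilon> (cball 0 1) \<beta>) S \<and> f \<in> S
              \<longrightarrow> S \<inter> M \<noteq> {})"
  shows "f \<in> szlenk_iter \<epsilon> (cball 0 1) \<alpha>"
proof -
  have "\<beta> \<le> \<alpha> \<longrightarrow> f \<in> szlenk_iter \<epsilon> (cball 0 1) \<beta>" for \<beta>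
  proof (induction \<beta> rule: less_induct)
    case (less \<beta>)
    show ?case
    proof (cases \<beta> rule: iter_cases)
      case 1 then show ?thesis using assms(2) by (simp add: iter_least)
    next
      case (2 \<mu>)
      show ?thesis
      proof
        assume le: "\<beta> \<le> \<alpha>"
        have fm: "f \<in> szlenk_iter \<epsilon> (cball 0 1) \<mu>" using less[of \<mu>] 2 le by auto
        have "\<not> diameter S < \<epsilon>" if S: "is_wstar_slice (szlenk_iter \<epsilon> (cball 0 1) \<mu>) S" "f \<in> S" for S
        proof -
          have "\<mu> < \<alpha>" using 2 le by auto
          then have "S \<inter> M \<noteq> {}" using assms(4) S by blast
          then obtain g where g: "g \<in> S" "g \<in> M" by blast
          have "S \<subseteq> cball 0 1" using S(1) iter_sub unfolding is_wstar_slice_def by blast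
          then have "bounded S" using bounded_cball bounded_subset by blast
          then have "dist f g \<le> diameter S" using diameter_bounded_bound S(2) g(1) by blast
          then show ?thesis using assms(3) g(2) by force
        qed
        then show "f \<in> szlenk_iter \<epsilon> (cball 0 1) \<beta>"
          using fm 2 by (auto simp: iter_succ szlenk_d_def)
      qed
    next
      case (3 \<mu>0) then show ?thesis using less by (auto simp: iter_limit)
    qed
  qed
  then show ?thesis by simp
qed

end
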